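(* Let $A\in\mathbb{R}^{m\times n}$, let $\sigma=\|A\|^2$ (squared spectral norm), and let $v\in\mathbb{R}^n$ with $\|v\|=1$. Define $$u=\begin{cases}\dfrac{\sigma v-A^tAv}{\sqrt{\sigma-\|Av\|^2}} & \text{if } v \text{ is not a dominant singular vector of } A,\\[2mm] 0 & \text{otherwise,}\end{cases}$$ and $H=\sigma\mathbf{I}-uu^t$. Then $v^t(H-A^tA)v=0$ and $H\succeq A^tA$.
   Context: $\|\cdot\|$ is the Euclidean norm on vectors and the induced (spectral) norm on matrices, so $\|A\|^2=\lambda_{\max}(A^tA)$. A unit vector $v$ is a dominant singular vector of $A$ if $\|Av\|=\|A\|$ (equivalently, $v$ is an eigenvector of $A^tA$ for its largest eigenvalue); if $v$ is not dominant then $\sigma-\|Av\|^2>0$. $\mathbf I$ is the identity matrix, $M\succeq N$ means $M-N$ is positive semidefinite. *)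

theory Defs
  imports "HOL-Analysis.Analysis"
begin

definition spec_norm :: "real^'n^'m \<Rightarrow> real" where
  "spec_norm A = onorm (\<lambda>x. A *v x)"

definition dominant_sv :: "real^'n^'m \<Rightarrow> real^'n \<Rightarrow> bool" where
  "dominant_sv A v \<longleftrightarrow> norm v = 1 \<and> norm (A *v v) = spec_norm A"

definition loewner_ge :: "real^'n^'n \<Rightarrow> real^'n^'n \<Rightarrow> bool" where
  "loewner_ge M N \<longleftrightarrow> (\<forall>x. x \<bullet> ((M - N) *v x) \<ge> 0)"

definition outer :: "real^'n \<Rightarrow> real^'n \<Rightarrow> real^'n^'n" where
  "outer u w = (\<chi> i j. u $ i * w $ j)"

end

theory Submission
  imports Defs
begin

lemma ata_inner: "(x::real^'n) \<bullet> ((transpose A ** A) *v y) = (A *v x) \<bullet> (A *v y)"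
proof -
  have "x \<bullet> ((transpose A ** A) *v y) = (transpose A *v (A *v y)) \<bullet> x"
    by (simp add: matrix_vector_mul_assoc inner_commute)
  also have "\<dots> = (A *v y) \<bullet> (A *v x)"
    by (simp only: transpose_matrix_vector dot_lmul_matrix)
  finally show ?thesis by (simp add: inner_commute)
qed

lemma outer_mult: "outer u u *v x = (u \<bullet> x) *\<^sub>R (u :: real^'n)"
  by (simp add: vec_eq_iff outer_def matrix_vector_mult_def inner_vec_def
      sum_distrib_left mult.commute mult.left_commute)

lemma norm_le_spec: "norm (A *v x) \<le> spec_norm A * norm x"
  unfolding spec_norm_def using onorm[OF matrix_vector_mul_bounded_linear] .

lemma cs_psd:
  fixes a b c :: real
  assumes a: "\<And>t. 0 \<le> a - 2 * t * b + t^2 * c" and c: "c > 0"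
  shows "b^2 / c \<le> a"
proof -
  have "0 \<le> a - 2 * (b/c) * b + (b/c)^2 * c" using a .
  also have "\<dots> = a - b^2/c" using c by (simp add: field_simps power2_eq_square)
  finally show ?thesis by simp
qed

theorem lemma1:
  fixes A :: "real^'n^'m" and v :: "real^'n"
  assumes "norm v = 1"
  defines "\<sigma> \<equiv> (spec_norm A)\<^sup>2"
  defines "u \<equiv> (if \<not> dominant_sv A v
                 then (1 / sqrt (\<sigma> - (norm (A *v v))\<^sup>2)) *\<^sub>R
                        (\<sigma> *\<^sub>R v - (transpose A ** A) *v v)
                 else 0)"
  defines "H \<equiv> \<sigma> *\<^sub>R mat 1 - outer u u"
  shows "v \<bullet> ((H - transpose A ** A) *v v) = 0 \<and> loewner_ge H (transpose A ** A)"
proof -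
  let ?B = "transpose A ** A"
  define Q where "Q x y = \<sigma> * (x \<bullet> y) - (A *v x) \<bullet> (A *v y)" for x y
  have main: "x \<bullet> ((H - ?B) *v x) = Q x x - (u \<bullet> x)^2" for x
    unfolding H_def Q_def
    by (simp add: matrix_vector_mult_diff_rdistrib outer_mult ata_inner
        scaleR_matrix_vector_assoc[symmetric] inner_diff_right power2_eq_square inner_commute)
  have Qpos: "Q x x \<ge> 0" for x
  proof -
    have "norm (A *v x) \<le> spec_norm A * norm x" by (rule norm_le_spec)
    hence "(norm (A *v x))^2 \<le> (spec_norm A * norm x)^2"
      by (simp add: power_mono)
    thus ?thesis unfolding Q_def \<sigma>_def
      by (simp add: power_mult_distrib dot_square_norm power2_norm_eq_inner[symmetric])
  qed
  have Qlin: "Q (x - t *\<^sub>R v) (x - t *\<^sub>R v) = Q x x - 2 * t * Q x v + t^2 * Q v v" for x t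
    unfolding Q_def
    by (simp add: matrix_vector_mult_diff_distrib inner_diff_left inner_diff_right
        matrix_vector_mult_scaleR inner_commute algebra_simps power2_eq_square)
  have Qvv: "Q v v = \<sigma> - (norm (A *v v))^2"
    unfolding Q_def using assms(1) by (simp add: power2_norm_eq_inner[symmetric])
  show ?thesis
  proof (cases "dominant_sv A v")
    case True
    hence u0: "u = 0" unfolding u_def by simp
    have "Q v v = 0" using True Qvv unfolding dominant_sv_def \<sigma>_def by simp
    thus ?thesis using main Qpos u0 unfolding loewner_ge_def by simp
  next
    case False
    hence "norm (A *v v) \<noteq> spec_norm A" using assms(1) unfolding dominant_sv_def by simp
    moreover have "norm (A *v v) \<le> spec_norm A" using norm_le_spec[of A v] assms(1) by simp
    ultimately have lt: "norm (A *v v) < spec_norm A" by simp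
    hence "(norm (A *v v))^2 < (spec_norm A)^2"
      by (simp add: power_strict_mono)
    hence c: "Q v v > 0" using Qvv \<sigma>_def by simp
    have Qx: "Q x v = x \<bullet> (\<sigma> *\<^sub>R v - ?B *v v)" for x
      unfolding Q_def by (simp add: ata_inner inner_diff_right)
    have ue: "u = (1/sqrt (Q v v)) *\<^sub>R (\<sigma> *\<^sub>R v - ?B *v v)"
      using False by (simp add: u_def Qvv)
    have ux: "u \<bullet> x = Q x v / sqrt (Q v v)" for x
      unfolding ue Qx by (simp add: inner_commute)
    have usq: "(u \<bullet> x)^2 = (Q x v)^2 / Q v v" for x
      using c by (simp add: ux power_divide)
    have "Q v v = Q v v" ..
    have 1: "v \<bullet> ((H - ?B) *v v) = 0"
    proof -
      have "(u \<bullet> v)^2 = Q v v" using usq[of v] c by (simp add: power2_eq_square)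
      thus ?thesis by (simp add: main)
    qed
    have "Q x x - (u \<bullet> x)^2 \<ge> 0" for x
      using cs_psd[of "Q x x" "Q x v" "Q v v"] Qlin Qpos c usq by (metis diff_ge_0_iff_ge)
    thus ?thesis using 1 main unfolding loewner_ge_def by simp
  qed
qed

end
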